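(* Let $T$ and $B$ be two flat-foldable developable degree-4 single-vertex creased papers sharing two panels, so that they share one inner crease $c$ (the crease joining the two vertices); this union is called a unit. Let $\alpha_1,\alpha_2\in(0,\pi)$ be the sector angles of $T$ adjacent to $c$ and $\alpha_3,\alpha_4\in(0,\pi)$ the sector angles of $B$ adjacent to $c$, with $\alpha_1,\alpha_2$ not both equal to $\pi/2$ and $\alpha_3,\alpha_4$ not both equal to $\pi/2$. Suppose the unit folds rigidly over a closed interval of the common folding angle $\rho$ of $c$ containing more than one point, each vertex moving along one of its two branches (described in the context). For each vertex, the two inner creases adjacent to $c$ lie on the two sides of $c$; call the creases of $T$ and $B$ lying on the same side of $c$ "corresponding". Then the folding angles of corresponding creases of $T$ and $B$ are equal up to sign throughout the interval (i.e. $\rho_2\equiv\pm\rho_5$ and $\rho_4\equiv\pm\rho_7$, where $\rho_2,\rho_4$ are the side folding angles of $T$ and $\rho_5,\rho_7$ the corresponding ones of $B$) if and only if one of the following holds: (i) both $T$ and $B$ move along branch 1, and $$\frac{\tan\frac{\alpha_1}{2}}{\tan\frac{\alpha_2}{2}}=\frac{\tan\frac{\alpha_3}{2}}{\tan\frac{\alpha_4}{2}}\quad\text{or}\quad \frac{\tan\frac{\alpha_1}{2}}{\tan\frac{\alpha_2}{2}}=\frac{\tan\frac{\alpha_4}{2}}{\tan\frac{\alpha_3}{2}};$$ (ii) both $T$ and $B$ move along branch 2, and $$\tan\tfrac{\alpha_1}{2}\tan\tfrac{\alpha_2}{2}=\tan\tfrac{\alpha_3}{2}\tan\tfrac{\alpha_4}{2}\quad\text{or}\quad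 \tan\tfrac{\alpha_1}{2}\tan\tfrac{\alpha_2}{2}\tan\tfrac{\alpha_3}{2}\tan\tfrac{\alpha_4}{2}=1.$$ In particular, the condition can never hold when one vertex moves along branch 1 and the other along branch 2.
   Context: A developable degree-4 single-vertex creased paper consists of four rigid planar panels around a vertex, with sector angles summing to $2\pi$, hinged along four inner creases; a rigid folding motion assigns to each crease a signed folding angle (0 = unfolded, sign = mountain/valley), the folding angle of a crease being intrinsic to that crease. It is flat-foldable if opposite sector angles sum to $\pi$. For a flat-foldable vertex with sector angles $\beta_1,\beta_2,\beta_3,\beta_4$ in cyclic order, $\beta_1+\beta_3=\pi$, $\beta_2+\beta_4=\pi$, $\beta_1,\beta_2\in(0,\pi)$ not both $\pi/2$, and creases $c_1$ (between $\beta_1,\beta_2$), $c_2$ (between $\beta_2,\beta_3$), $c_3$ (between $\beta_3,\beta_4$), $c_4$ (between $\beta_4,\beta_1$) with folding angles $\rho_1,\dots,\rho_4$, its rigid folding motions lie on two branches: Branch 1: $\tan\frac{\rho_2}{2}=\frac{\sin\frac{\beta_2-\beta_1}{2}}{\sin\frac{\beta_2+\beta_1}{2}}\tan\frac{\rho_1}{2}$, $\rho_3=\rho_1$, $\rho_4=-\rho_2$. Branch 2: $\tan\frac{\rho_2}{2}=-\frac{\cos\frac{\beta_2-\beta_1}{2}}{\cos\frac{\beta_2+\beta_1}{2}}\tan\frac{\rho_1}{2}$, $\rho_3=-\rho_1$, $\rho_4=\rho_2$. In the claim these are applied to each of $T$ and $B$ with $c_1$ taken to be the shared crease $c$ (so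 $(\beta_1,\beta_2)=(\alpha_1,\alpha_2)$ for $T$ and $(\alpha_3,\alpha_4)$ for $B$), the side creases being $c_2$ and $c_4$ of each vertex. *)

theory Defs
  imports Complex_Main
begin

text \<open>A developable flat-foldable degree-4 vertex with sector angles b1, b2, b3, b4
  in cyclic order (c1 between b1 and b2).\<close>
definition flat_foldable_vertex :: "real \<Rightarrow> real \<Rightarrow> real \<Rightarrow> real \<Rightarrow> bool" where
  "flat_foldable_vertex b1 b2 b3 b4 \<longleftrightarrow>
     0 < b1 \<and> b1 < pi \<and> 0 < b2 \<and> b2 < pi \<and> 0 < b3 \<and> 0 < b4 \<and>
     b1 + b2 + b3 + b4 = 2 * pi \<and> b1 + b3 = pi \<and> b2 + b4 = pi \<and>
     \<not> (b1 = pi / 2 \<and> b2 = pi / 2)"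

text \<open>Branch equations (context), with the denominators cleared:
  folding angles r1..r4 of creases c1..c4 of a flat-foldable vertex whose sector
  angles adjacent to c1 are b1, b2.\<close>
definition branch1 :: "real \<Rightarrow> real \<Rightarrow> real \<Rightarrow> real \<Rightarrow> real \<Rightarrow> real \<Rightarrow> bool" where
  "branch1 b1 b2 r1 r2 r3 r4 \<longleftrightarrow>
     tan (r2 / 2) * sin ((b2 + b1) / 2) = sin ((b2 - b1) / 2) * tan (r1 / 2) \<and>
     r3 = r1 \<and> r4 = - r2"

definition branch2 :: "real \<Rightarrow> real \<Rightarrow> real \<Rightarrow> real \<Rightarrow> real \<Rightarrow> real \<Rightarrow> bool" where
  "branch2 b1 b2 r1 r2 r3 r4 \<longleftrightarrow>
     tan (r2 / 2) * cos ((b2 + b1) / 2) = - cos ((b2 - b1) / 2) * tan (r1 / 2) \<and>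
     r3 = - r1 \<and> r4 = r2"

definition on_branch :: "nat \<Rightarrow> real \<Rightarrow> real \<Rightarrow> real \<Rightarrow> real \<Rightarrow> real \<Rightarrow> real \<Rightarrow> bool" where
  "on_branch k b1 b2 r1 r2 r3 r4 \<longleftrightarrow>
     (k = 1 \<and> branch1 b1 b2 r1 r2 r3 r4) \<or> (k = 2 \<and> branch2 b1 b2 r1 r2 r3 r4)"

end

theory Submission
  imports Defs
begin

lemma tan_inj_half:
  assumes "-pi < u" "u < pi" "-pi < v" "v < pi" "tan (u/2) = tan (v/2)"
  shows "u = v"
proof -
  have "arctan (tan (u/2)) = u/2" by (rule arctan_tan) (use assms in linarith)+
  moreover have "arctan (tan (v/2)) = v/2" by (rule arctan_tan) (use assms in linarith)+
  ultimately have "u/2 = v/2" using assms(5) by metis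
  then show ?thesis by simp
qed

lemma tan_half_zero:
  assumes "-pi < u" "u < pi" "tan (u/2) = 0" shows "u = 0"
  using tan_inj_half[of u 0] assms by simp

lemma sin_ratio:
  assumes "0<b1" "b1<pi" "0<b2" "b2<pi"
  shows "sin ((b2 - b1)/2) / sin ((b2 + b1)/2) = (tan (b2/2) - tan (b1/2)) / (tan (b2/2) + tan (b1/2))"
proof -
  have c1: "cos (b1/2) > 0" by (rule cos_gt_zero_pi) (use assms in auto)
  have c2: "cos (b2/2) > 0" by (rule cos_gt_zero_pi) (use assms in auto)
  have e1: "(b2 - b1)/2 = b2/2 - b1/2" "(b2 + b1)/2 = b2/2 + b1/2" by auto
  have n: "tan (b2/2) - tan (b1/2) = sin ((b2 - b1)/2) / (cos (b1/2) * cos (b2/2))"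
    unfolding e1 sin_diff tan_def using c1 c2 by (simp add: field_simps)
  have d: "tan (b2/2) + tan (b1/2) = sin ((b2 + b1)/2) / (cos (b1/2) * cos (b2/2))"
    unfolding e1 sin_add tan_def using c1 c2 by (simp add: field_simps)
  show ?thesis unfolding n d using c1 c2 by simp
qed

lemma cos_ratio:
  assumes "0<b1" "b1<pi" "0<b2" "b2<pi"
  shows "cos ((b2 - b1)/2) / cos ((b2 + b1)/2) = (1 + tan (b1/2) * tan (b2/2)) / (1 - tan (b1/2) * tan (b2/2))"
    and "cos ((b2 + b1)/2) = cos (b1/2) * cos (b2/2) * (1 - tan (b1/2) * tan (b2/2))"
    and "cos ((b2 - b1)/2) > 0"
proof -
  have c1: "cos (b1/2) > 0" by (rule cos_gt_zero_pi) (use assms in auto)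
  have c2: "cos (b2/2) > 0" by (rule cos_gt_zero_pi) (use assms in auto)
  have e1: "(b2 - b1)/2 = b2/2 - b1/2" "(b2 + b1)/2 = b2/2 + b1/2" by auto
  have n: "1 + tan (b1/2) * tan (b2/2) = cos ((b2 - b1)/2) / (cos (b1/2) * cos (b2/2))"
    unfolding e1 cos_diff tan_def using c1 c2 by (simp add: field_simps)
  have d: "1 - tan (b1/2) * tan (b2/2) = cos ((b2 + b1)/2) / (cos (b1/2) * cos (b2/2))"
    unfolding e1 cos_add tan_def using c1 c2 by (simp add: field_simps)
  show "cos ((b2 - b1)/2) / cos ((b2 + b1)/2) = (1 + tan (b1/2) * tan (b2/2)) / (1 - tan (b1/2) * tan (b2/2))"
    unfolding n d using c1 c2 by simp
  show "cos ((b2 + b1)/2) = cos (b1/2) * cos (b2/2) * (1 - tan (b1/2) * tan (b2/2))"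
    unfolding d using c1 c2 by simp
  show "cos ((b2 - b1)/2) > 0" by (rule cos_gt_zero_pi) (use assms in auto)
qed

lemma L1:
  fixes x y z w :: real
  assumes "x>0" "y>0" "z>0" "w>0"
  shows "((y-x)/(y+x) = (w-z)/(w+z) \<or> (y-x)/(y+x) = -((w-z)/(w+z))) \<longleftrightarrow> (x/y = z/w \<or> x/y = w/z)"
proof -
  have a: "y+x \<noteq> 0" "w+z \<noteq> 0" "y \<noteq> 0" "w \<noteq> 0" "z \<noteq> 0" using assms by auto
  have "(y-x)/(y+x) = (w-z)/(w+z) \<longleftrightarrow> (y-x)*(w+z) = (w-z)*(y+x)" using a by (simp add: frac_eq_eq)
  also have "\<dots> \<longleftrightarrow> x*w = z*y" by (simp add: algebra_simps) (rule iffI; linarith)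
  also have "\<dots> \<longleftrightarrow> x/y = z/w" using a by (simp add: frac_eq_eq)
  finally have 1: "(y-x)/(y+x) = (w-z)/(w+z) \<longleftrightarrow> x/y = z/w" .
  have "(y-x)/(y+x) = -((w-z)/(w+z)) \<longleftrightarrow> (y-x)*(w+z) = -((w-z)*(y+x))" using a
    by (simp add: frac_eq_eq minus_divide_left algebra_simps)
  also have "\<dots> \<longleftrightarrow> x*z = w*y" by (simp add: algebra_simps) (rule iffI; linarith)
  also have "\<dots> \<longleftrightarrow> x/y = w/z" using a by (simp add: frac_eq_eq)
  finally have 2: "(y-x)/(y+x) = -((w-z)/(w+z)) \<longleftrightarrow> x/y = w/z" .
  show ?thesis using 1 2 by blast
qed

lemma L2:
  fixes p q :: real
  assumes "p>0" "q>0" "p\<noteq>1" "q\<noteq>1"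
  shows "(-(1+p)/(1-p) = -(1+q)/(1-q) \<or> -(1+p)/(1-p) = -(-(1+q)/(1-q))) \<longleftrightarrow> (p = q \<or> p*q = 1)"
proof -
  have a: "1 - p \<noteq> 0" "1 - q \<noteq> 0" using assms by auto
  have "-(1+p)/(1-p) = -(1+q)/(1-q) \<longleftrightarrow> (-(1+p))*(1-q) = (-(1+q))*(1-p)" using a by (simp add: frac_eq_eq)
  also have "\<dots> \<longleftrightarrow> p = q" by (simp add: algebra_simps) (rule iffI; linarith)
  finally have 1: "-(1+p)/(1-p) = -(1+q)/(1-q) \<longleftrightarrow> p = q" .
  have m: "-(-(1+q)/(1-q)) = (1+q)/(1-q)" by (simp only: minus_divide_left minus_minus)
  have "-(1+p)/(1-p) = -(-(1+q)/(1-q)) \<longleftrightarrow> (-(1+p))*(1-q) = (1+q)*(1-p)" unfolding m using a by (simp add: frac_eq_eq)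
  also have "\<dots> \<longleftrightarrow> p*q = 1" by (simp add: algebra_simps)
  finally have 2: "-(1+p)/(1-p) = -(-(1+q)/(1-q)) \<longleftrightarrow> p*q = 1" .
  show ?thesis using 1 2 by blast
qed

lemma L3:
  fixes x y p :: real
  assumes "x>0" "y>0" "p>0" "p\<noteq>1"
  shows "(y-x)/(y+x) \<noteq> -(1+p)/(1-p)" "(y-x)/(y+x) \<noteq> -(-(1+p)/(1-p))"
proof -
  define u where "u = (y-x)/(y+x)"
  define v where "v = (1+p)/(1-p)"
  have m: "-(1+p)/(1-p) = - v" "-(-(1+p)/(1-p)) = v" unfolding v_def
    by (simp only: minus_divide_left minus_minus)+
  have "\<bar>u\<bar> < 1" unfolding u_def using assms by (simp add: abs_less_iff field_simps)
  moreover have "\<bar>v\<bar> > 1" unfolding v_def using assms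
    by (cases "p < 1") (auto simp: abs_if field_simps)
  ultimately show "(y-x)/(y+x) \<noteq> -(1+p)/(1-p)" "(y-x)/(y+x) \<noteq> -(-(1+p)/(1-p))"
    unfolding m u_def[symmetric] by auto
qed

definition KK :: "nat \<Rightarrow> real \<Rightarrow> real \<Rightarrow> real" where
  "KK k x y = (if k = 1 then (y - x)/(y + x) else -(1 + x*y)/(1 - x*y))"

lemma branch_coef:
  assumes "0<b1" "b1<pi" "0<b2" "b2<pi" "on_branch k b1 b2 t r2 r3 r4"
    and "k = 2 \<Longrightarrow> tan (b1/2) * tan (b2/2) \<noteq> 1"
  shows "tan (r2/2) = KK k (tan (b1/2)) (tan (b2/2)) * tan (t/2) \<and> r4 = (if k = 1 then - r2 else r2)"
proof -
  have "k = 1 \<and> branch1 b1 b2 t r2 r3 r4 \<or> k = 2 \<and> branch2 b1 b2 t r2 r3 r4"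
    using assms(5) unfolding on_branch_def .
  then show ?thesis
  proof
    assume h: "k = 1 \<and> branch1 b1 b2 t r2 r3 r4"
    have sp: "sin ((b2 + b1)/2) > 0" by (rule sin_gt_zero) (use assms in auto)
    have e: "tan (r2/2) * sin ((b2 + b1)/2) = sin ((b2 - b1)/2) * tan (t/2)" "r4 = - r2"
      using h unfolding branch1_def by auto
    have "tan (r2/2) = sin ((b2 - b1)/2) / sin ((b2 + b1)/2) * tan (t/2)"
      using e(1) sp by (simp add: field_simps)
    then show ?thesis using sin_ratio[OF assms(1-4)] h e(2) unfolding KK_def by simp
  next
    assume h: "k = 2 \<and> branch2 b1 b2 t r2 r3 r4"
    note cr = cos_ratio[OF assms(1-4)]
    have c1: "cos (b1/2) > 0" by (rule cos_gt_zero_pi) (use assms in auto)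
    have c2: "cos (b2/2) > 0" by (rule cos_gt_zero_pi) (use assms in auto)
    have cp: "cos ((b2 + b1)/2) \<noteq> 0" using cr(2) c1 c2 assms(6) h by auto
    have e: "tan (r2/2) * cos ((b2 + b1)/2) = - cos ((b2 - b1)/2) * tan (t/2)" "r4 = r2"
      using h unfolding branch2_def by auto
    have "tan (r2/2) = - (cos ((b2 - b1)/2) / cos ((b2 + b1)/2)) * tan (t/2)"
      using e(1) cp by (simp add: field_simps)
    then show ?thesis using cr(1) h e(2) unfolding KK_def by (simp add: minus_divide_left)
  qed
qed

lemma branch2_degen:
  assumes "0<b1" "b1<pi" "0<b2" "b2<pi" "on_branch 2 b1 b2 t r2 r3 r4"
    and "tan (t/2) \<noteq> 0"
  shows "tan (b1/2) * tan (b2/2) \<noteq> 1"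
proof
  assume p: "tan (b1/2) * tan (b2/2) = 1"
  note cr = cos_ratio[OF assms(1-4)]
  have "cos ((b2 + b1)/2) = 0" using cr(2) p by simp
  moreover have "tan (r2/2) * cos ((b2 + b1)/2) = - cos ((b2 - b1)/2) * tan (t/2)"
    using assms(5) unfolding on_branch_def branch2_def by auto
  ultimately show False using cr(3) assms(6) by simp
qed

theorem mainTheorem2:
  fixes \<alpha>1 \<alpha>2 \<alpha>3 \<alpha>4 a b :: real
    and \<rho>2 \<rho>3 \<rho>4 \<rho>5 \<rho>6 \<rho>7 :: "real \<Rightarrow> real"
    and kT kB :: nat
  assumes T_vertex: "flat_foldable_vertex \<alpha>1 \<alpha>2 (pi - \<alpha>1) (pi - \<alpha>2)"
    and B_vertex: "flat_foldable_vertex \<alpha>3 \<alpha>4 (pi - \<alpha>3) (pi - \<alpha>4)"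
    and interval: "-pi < a" "a < b" "b < pi"
    and branches: "kT \<in> {1, 2}" "kB \<in> {1, 2}"
    and range: "\<forall>t\<in>{a..b}. \<forall>r\<in>{\<rho>2 t, \<rho>3 t, \<rho>4 t, \<rho>5 t, \<rho>6 t, \<rho>7 t}. -pi < r \<and> r < pi"
    and T_motion: "\<forall>t\<in>{a..b}. on_branch kT \<alpha>1 \<alpha>2 t (\<rho>2 t) (\<rho>3 t) (\<rho>4 t)"
    and B_motion: "\<forall>t\<in>{a..b}. on_branch kB \<alpha>3 \<alpha>4 t (\<rho>5 t) (\<rho>6 t) (\<rho>7 t)"
  shows "(((\<forall>t\<in>{a..b}. \<rho>2 t = \<rho>5 t) \<or> (\<forall>t\<in>{a..b}. \<rho>2 t = - \<rho>5 t)) \<and>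
          ((\<forall>t\<in>{a..b}. \<rho>4 t = \<rho>7 t) \<or> (\<forall>t\<in>{a..b}. \<rho>4 t = - \<rho>7 t)))
    \<longleftrightarrow>
     ((kT = 1 \<and> kB = 1 \<and>
        (tan (\<alpha>1/2) / tan (\<alpha>2/2) = tan (\<alpha>3/2) / tan (\<alpha>4/2) \<or>
         tan (\<alpha>1/2) / tan (\<alpha>2/2) = tan (\<alpha>4/2) / tan (\<alpha>3/2))) \<or>
      (kT = 2 \<and> kB = 2 \<and>
        (tan (\<alpha>1/2) * tan (\<alpha>2/2) = tan (\<alpha>3/2) * tan (\<alpha>4/2) \<or>
         tan (\<alpha>1/2) * tan (\<alpha>2/2) * tan (\<alpha>3/2) * tan (\<alpha>4/2) = 1)))"
proof -
  have A: "0<\<alpha>1" "\<alpha>1<pi" "0<\<alpha>2" "\<alpha>2<pi" using T_vertex unfolding flat_foldable_vertex_def by auto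
  have Bv: "0<\<alpha>3" "\<alpha>3<pi" "0<\<alpha>4" "\<alpha>4<pi" using B_vertex unfolding flat_foldable_vertex_def by auto
  define t0 where "t0 = (if b = 0 then a else b)"
  have t0I: "t0 \<in> {a..b}" unfolding t0_def using interval by auto
  have t0nz: "t0 \<noteq> 0" unfolding t0_def using interval by auto
  have tt0: "tan (t0/2) \<noteq> 0"
    using tan_half_zero[of t0] t0nz t0I interval by auto
  define x1 where "x1 = tan (\<alpha>1/2)"
  define x2 where "x2 = tan (\<alpha>2/2)"
  define x3 where "x3 = tan (\<alpha>3/2)"
  define x4 where "x4 = tan (\<alpha>4/2)"
  have xpos: "x1 > 0" "x2 > 0" "x3 > 0" "x4 > 0" unfolding x1_def x2_def x3_def x4_def
    using A Bv by (auto intro!: tan_gt_zero)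
  have ndT: "kT = 2 \<Longrightarrow> x1 * x2 \<noteq> 1"
  proof -
    assume "kT = 2"
    then have "on_branch 2 \<alpha>1 \<alpha>2 t0 (\<rho>2 t0) (\<rho>3 t0) (\<rho>4 t0)" using T_motion t0I by auto
    then show ?thesis unfolding x1_def x2_def using branch2_degen[OF A _ tt0] by blast
  qed
  have ndB: "kB = 2 \<Longrightarrow> x3 * x4 \<noteq> 1"
  proof -
    assume "kB = 2"
    then have "on_branch 2 \<alpha>3 \<alpha>4 t0 (\<rho>5 t0) (\<rho>6 t0) (\<rho>7 t0)" using B_motion t0I by auto
    then show ?thesis unfolding x3_def x4_def using branch2_degen[OF Bv _ tt0] by blast
  qed
  define KT where "KT = KK kT x1 x2"
  define KB where "KB = KK kB x3 x4"
  have hT: "\<forall>t\<in>{a..b}. tan (\<rho>2 t/2) = KT * tan (t/2) \<and> \<rho>4 t = (if kT = 1 then - \<rho>2 t else \<rho>2 t)"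
    unfolding KT_def x1_def x2_def using branch_coef[OF A] T_motion ndT unfolding x1_def x2_def by blast
  have hB: "\<forall>t\<in>{a..b}. tan (\<rho>5 t/2) = KB * tan (t/2) \<and> \<rho>7 t = (if kB = 1 then - \<rho>5 t else \<rho>5 t)"
    unfolding KB_def x3_def x4_def using branch_coef[OF Bv] B_motion ndB unfolding x3_def x4_def by blast
  have K12: "kT = 1 \<or> kT = 2" "kB = 1 \<or> kB = 2" using branches by auto
  have same: "KT = KB \<or> KT = - KB \<Longrightarrow> kT = kB"
  proof -
    assume "KT = KB \<or> KT = - KB"
    moreover
    { assume "kT = 1" "kB = 2"
      then have "KT \<noteq> KB \<and> KT \<noteq> - KB" unfolding KT_def KB_def KK_def
        using L3[of x1 x2 "x3*x4"] xpos ndB by auto }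
    moreover
    { assume "kT = 2" "kB = 1"
      then have "KB \<noteq> KT \<and> KB \<noteq> - KT" unfolding KT_def KB_def KK_def
        using L3[of x3 x4 "x1*x2"] xpos ndT by auto }
    ultimately show "kT = kB" using K12 by force
  qed
  have key: "(((\<forall>t\<in>{a..b}. \<rho>2 t = \<rho>5 t) \<or> (\<forall>t\<in>{a..b}. \<rho>2 t = - \<rho>5 t)) \<and>
          ((\<forall>t\<in>{a..b}. \<rho>4 t = \<rho>7 t) \<or> (\<forall>t\<in>{a..b}. \<rho>4 t = - \<rho>7 t)))
        \<longleftrightarrow> (KT = KB \<or> KT = - KB)"
  proof
    assume L: "((\<forall>t\<in>{a..b}. \<rho>2 t = \<rho>5 t) \<or> (\<forall>t\<in>{a..b}. \<rho>2 t = - \<rho>5 t)) \<and>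
          ((\<forall>t\<in>{a..b}. \<rho>4 t = \<rho>7 t) \<or> (\<forall>t\<in>{a..b}. \<rho>4 t = - \<rho>7 t))"
    have e2: "tan (\<rho>2 t0/2) = KT * tan (t0/2)" "tan (\<rho>5 t0/2) = KB * tan (t0/2)"
      using hT hB t0I by auto
    from L have "\<rho>2 t0 = \<rho>5 t0 \<or> \<rho>2 t0 = - \<rho>5 t0" using t0I by blast
    then show "KT = KB \<or> KT = - KB"
    proof
      assume h: "\<rho>2 t0 = \<rho>5 t0"
      have "KT * tan (t0/2) = KB * tan (t0/2)" using e2 h by metis
      then show ?thesis using tt0 by simp
    next
      assume "\<rho>2 t0 = - \<rho>5 t0"
      then have "tan (\<rho>2 t0/2) = - tan (\<rho>5 t0/2)" using tan_minus[of "\<rho>5 t0/2"] by simp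
      then have "KT * tan (t0/2) = (- KB) * tan (t0/2)" using e2 by (metis mult_minus_left)
      then have "KT = - KB" using tt0 by (metis mult_cancel_right)
      then show ?thesis by simp
    qed
  next
    assume K: "KT = KB \<or> KT = - KB"
    have kk: "kT = kB" using same K .
    have rng: "\<And>t. t \<in> {a..b} \<Longrightarrow> -pi < \<rho>2 t \<and> \<rho>2 t < pi \<and> -pi < \<rho>5 t \<and> \<rho>5 t < pi"
      using range by auto
    from K show "((\<forall>t\<in>{a..b}. \<rho>2 t = \<rho>5 t) \<or> (\<forall>t\<in>{a..b}. \<rho>2 t = - \<rho>5 t)) \<and>
          ((\<forall>t\<in>{a..b}. \<rho>4 t = \<rho>7 t) \<or> (\<forall>t\<in>{a..b}. \<rho>4 t = - \<rho>7 t))"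
    proof
      assume KE: "KT = KB"
      have r: "\<forall>t\<in>{a..b}. \<rho>2 t = \<rho>5 t"
      proof
        fix t assume t: "t \<in> {a..b}"
        have "tan (\<rho>2 t/2) = tan (\<rho>5 t/2)" using hT hB t KE by simp
        then show "\<rho>2 t = \<rho>5 t" using tan_inj_half rng[OF t] by blast
      qed
      moreover have "\<forall>t\<in>{a..b}. \<rho>4 t = \<rho>7 t" using r hT hB kk by simp
      ultimately show ?thesis by blast
    next
      assume KE: "KT = - KB"
      have r: "\<forall>t\<in>{a..b}. \<rho>2 t = - \<rho>5 t"
      proof
        fix t assume t: "t \<in> {a..b}"
        have "tan (\<rho>2 t/2) = tan ((- \<rho>5 t)/2)" using hT hB t KE tan_minus[of "\<rho>5 t/2"] by simp
        then show "\<rho>2 t = - \<rho>5 t" using tan_inj_half[of "\<rho>2 t" "- \<rho>5 t"] rng[OF t] by auto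
      qed
      moreover have "\<forall>t\<in>{a..b}. \<rho>4 t = - \<rho>7 t" using r hT hB kk by simp
      ultimately show ?thesis by blast
    qed
  qed
  have rhs: "(KT = KB \<or> KT = - KB) \<longleftrightarrow>
     ((kT = 1 \<and> kB = 1 \<and> (x1 / x2 = x3 / x4 \<or> x1 / x2 = x4 / x3)) \<or>
      (kT = 2 \<and> kB = 2 \<and> (x1 * x2 = x3 * x4 \<or> x1 * x2 * x3 * x4 = 1)))"
  proof (cases "kT = kB")
    case False
    then show ?thesis using same by auto
  next
    case True
    show ?thesis
    proof (cases "kT = 1")
      case k1: True
      then show ?thesis using True L1[of x1 x2 x3 x4] xpos unfolding KT_def KB_def KK_def by simp
    next
      case k2: False
      then have "kT = 2" using K12 by auto
      then show ?thesis using True L2[of "x1*x2" "x3*x4"] xpos ndT ndB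
        unfolding KT_def KB_def KK_def by (simp add: mult.assoc)
    qed
  qed
  show ?thesis using key rhs unfolding x1_def x2_def x3_def x4_def by simp
qed

end
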